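(* Let $X_t=(1+\sin(\pi t))\max(Z_t,1/2)$, $t\in[0,1]$, and $F(\lambda)=\inf_{\sigma\in\mathcal T}\mathbb E_{\mathbb P}[X_\sigma\min(1,\lambda Z_\sigma)]$ for $\lambda>0$. Then (i) $F(\lambda)=1$ for all $\lambda\ge2$; (ii) the left derivative of $F$ at $2$ satisfies $F'_-(2)\ge\nu$, where $\nu=\frac12\mathbb E_{\mathbb P}[Z_1\mathbb I_{Z_1<1/2}]$.
   Context: Black–Scholes setup with horizon $1$: standard Brownian motion $W$ on a complete probability space $(\Omega,\mathcal F,\mathbb P)$, filtration $\mathcal F_t=\sigma\{W_s:s\le t\}$ completed by null sets; $Z_t=\exp(-\frac{\vartheta}{\kappa}W_t-\frac{\vartheta^2}{2\kappa^2}t)$ with constants $\kappa>0$, $\vartheta\in\mathbb R$. In $\sin(\pi t)$, $\pi=3.14\ldots$. $\mathcal T$ is the set of stopping times with values in $[0,1]$. $F$ is concave on $(0,\infty)$, so $F'_-(2)$ exists. *)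

theory Defs
  imports "HOL-Probability.Probability"
begin

definition brownian_motion :: "'a measure \<Rightarrow> (real \<Rightarrow> 'a \<Rightarrow> real) \<Rightarrow> bool" where
  "brownian_motion M W \<longleftrightarrow>
     prob_space M \<and>
     (\<forall>t. W t \<in> borel_measurable M) \<and>
     (AE \<omega> in M. W 0 \<omega> = 0 \<and> continuous_on {0..} (\<lambda>t. W t \<omega>)) \<and>
     (\<forall>s t. 0 \<le> s \<and> s < t \<longrightarrow>
        distributed M lborel (\<lambda>\<omega>. W t \<omega> - W s \<omega>)
          (\<lambda>x. ennreal (normal_density 0 (sqrt (t - s)) x))) \<and>
     (\<forall>(n::nat) (ts::nat \<Rightarrow> real). 0 \<le> ts 0 \<and> (\<forall>i<n. ts i < ts (Suc i)) \<longrightarrow>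
        prob_space.indep_vars M (\<lambda>_. borel) (\<lambda>i \<omega>. W (ts (Suc i)) \<omega> - W (ts i) \<omega>) {..<n})"

definition bm_filtration :: "'a measure \<Rightarrow> (real \<Rightarrow> 'a \<Rightarrow> real) \<Rightarrow> real \<Rightarrow> 'a measure" where
  "bm_filtration M W t =
     sigma (space M)
       ((\<Union>s\<in>{0..t}. {W s -` B \<inter> space M | B. B \<in> sets borel}) \<union> null_sets M)"

definition stopping_times01 :: "'a measure \<Rightarrow> (real \<Rightarrow> 'a \<Rightarrow> real) \<Rightarrow> ('a \<Rightarrow> real) set" where
  "stopping_times01 M W =
     {T. stopping_time (bm_filtration M W) T \<and> (\<forall>\<omega>\<in>space M. T \<omega> \<in> {0..1})}"

end

theory Submission
  imports Defs
begin


locale bmctx =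
  fixes M :: "'a measure" and W :: "real \<Rightarrow> 'a \<Rightarrow> real"
  assumes BM: "brownian_motion M W" and cpl: "complete_measure M"
begin

sublocale prob_space M using BM by (simp add: brownian_motion_def)
sublocale complete_measure M by (rule cpl)

lemma W_meas[measurable]: "W t \<in> borel_measurable M"
  using BM by (simp add: brownian_motion_def)

lemma W_AE: "AE \<omega> in M. W 0 \<omega> = 0 \<and> continuous_on {0..} (\<lambda>t. W t \<omega>)"
  using BM by (simp add: brownian_motion_def)

lemma W_distr: "0 \<le> s \<Longrightarrow> s < t \<Longrightarrow> distributed M lborel (\<lambda>\<omega>. W t \<omega> - W s \<omega>)
          (\<lambda>x. ennreal (normal_density 0 (sqrt (t - s)) x))"
  using BM by (simp add: brownian_motion_def)

lemma W_indep: "0 \<le> ts 0 \<Longrightarrow> (\<forall>i<n. ts i < ts (Suc i)) \<Longrightarrow>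
        indep_vars (\<lambda>_. borel) (\<lambda>i \<omega>. W (ts (Suc i)) \<omega> - W (ts i) \<omega>) {..<n}"
  using BM by (simp add: brownian_motion_def)

lemma normal_exp_shift:
  assumes "s > 0"
  shows "normal_density 0 s x * exp (b * x - b\<^sup>2 * s\<^sup>2 / 2) = normal_density (b * s\<^sup>2) s x"
proof -
  have "- (x\<^sup>2) / (2 * s\<^sup>2) + (b * x - b\<^sup>2 * s\<^sup>2 / 2) = - (x - b * s\<^sup>2)\<^sup>2 / (2 * s\<^sup>2)"
    using assms by (simp add: field_simps power2_eq_square)
  then show ?thesis
    unfolding normal_density_def by (simp add: exp_add[symmetric])
qed

lemma mgf:
  assumes "0 \<le> s" "0 < h"
  shows "integrable M (\<lambda>\<omega>. exp (b * (W (s + h) \<omega> - W s \<omega>) - b\<^sup>2 * h / 2))"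
    and "(\<integral>\<omega>. exp (b * (W (s + h) \<omega> - W s \<omega>) - b\<^sup>2 * h / 2) \<partial>M) = 1"
proof -
  have D: "distributed M lborel (\<lambda>\<omega>. W (s + h) \<omega> - W s \<omega>)
          (\<lambda>x. ennreal (normal_density 0 (sqrt h) x))"
    using W_distr[of s "s+h"] assms by simp
  have hs: "(sqrt h)\<^sup>2 = h" using assms by simp
  have eq: "normal_density 0 (sqrt h) x * exp (b * x - b\<^sup>2 * h / 2) = normal_density (b * h) (sqrt h) x" for x
    using normal_exp_shift[of "sqrt h" x b] assms hs by simp
  have "integrable lborel (\<lambda>x. normal_density 0 (sqrt h) x * exp (b * x - b\<^sup>2 * h / 2))"
    unfolding eq using assms by simp
  then show "integrable M (\<lambda>\<omega>. exp (b * (W (s + h) \<omega> - W s \<omega>) - b\<^sup>2 * h / 2))"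
    using distributed_integrable[OF D, of "\<lambda>x. exp (b * x - b\<^sup>2 * h / 2)"] by simp
  have "(\<integral>x. normal_density 0 (sqrt h) x * exp (b * x - b\<^sup>2 * h / 2) \<partial>lborel) = 1"
    unfolding eq using assms by simp
  then show "(\<integral>\<omega>. exp (b * (W (s + h) \<omega> - W s \<omega>) - b\<^sup>2 * h / 2) \<partial>M) = 1"
    using distributed_integral[OF D, of "\<lambda>x. exp (b * x - b\<^sup>2 * h / 2)"] by simp
qed

definition Incr :: "(nat \<Rightarrow> real) \<Rightarrow> nat \<Rightarrow> 'a \<Rightarrow> real" where
  "Incr ts i \<omega> = W (ts (Suc i)) \<omega> - W (ts i) \<omega>"

lemma Incr_meas[measurable]: "Incr ts i \<in> borel_measurable M"
  unfolding Incr_def by measurable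

lemma pred_mem: "f \<in> borel_measurable N \<Longrightarrow> B \<in> sets borel \<Longrightarrow> Measurable.pred N (\<lambda>x. f x \<in> B)"
  unfolding pred_def using measurable_sets[of f N borel B] by (simp add: vimage_def Int_def conj_commute)

lemma core_indep:
  assumes J: "finite J" "J \<subseteq> {0..t}" and t: "0 \<le> t" and h: "0 < h"
    and B: "\<And>j. B j \<in> sets borel" and C: "C \<in> sets borel"
  shows "prob ({\<omega>\<in>space M. \<forall>j\<in>J. W j \<omega> \<in> B j} \<inter> ((\<lambda>\<omega>. W (t+h) \<omega> - W t \<omega>) -` C \<inter> space M))
       = prob {\<omega>\<in>space M. \<forall>j\<in>J. W j \<omega> \<in> B j} * prob ((\<lambda>\<omega>. W (t+h) \<omega> - W t \<omega>) -` C \<inter> space M)"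
proof -
  define S where "S = insert 0 (insert t J)"
  have finS: "finite S" using J by (simp add: S_def)
  define L where "L = sorted_list_of_set S"
  have setL: "set L = S" using finS by (simp add: L_def)
  have strL: "sorted_wrt (<) L" unfolding L_def by (rule sorted_list_of_set.strict_sorted_key_list_of_set)
  have sortL: "sorted L" unfolding L_def by simp
  define n where "n = length L"
  have n1: "n \<ge> 1" using setL S_def n_def by (cases L) auto
  define m where "m = n - 1"
  have mn: "n = Suc m" using n1 m_def by simp
  define ts where "ts i = (if i < n then L ! i else t + h + real (i - n))" for i
  have S_bd: "x \<in> S \<Longrightarrow> 0 \<le> x \<and> x \<le> t" for x using J t unfolding S_def by auto
  have L_bd: "i < n \<Longrightarrow> 0 \<le> L ! i \<and> L ! i \<le> t" for i using S_bd setL n_def by auto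
  have ts0: "ts 0 = 0"
  proof -
    have "0 \<in> set L" using setL S_def by auto
    then obtain k where k: "k < n" "L ! k = 0" using in_set_conv_nth n_def by metis
    have "L ! 0 \<le> L ! k" using sorted_nth_mono[OF sortL, of 0 k] k n_def by simp
    then show ?thesis using L_bd[of 0] k n1 by (simp add: ts_def)
  qed
  have tsm: "ts m = t"
  proof -
    have "t \<in> set L" using setL S_def by auto
    then obtain k where k: "k < n" "L ! k = t" using in_set_conv_nth n_def by metis
    have "L ! k \<le> L ! m" using sorted_nth_mono[OF sortL, of k m] k n_def mn by simp
    then show ?thesis using L_bd[of m] k mn by (simp add: ts_def)
  qed
  have tsn: "ts (Suc m) = t + h" using mn by (simp add: ts_def)
  have mono: "ts i < ts (Suc i)" for i
  proof (cases "Suc i < n")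
    case True
    then show ?thesis using sorted_wrt_nth_less[OF strL, of i "Suc i"] n_def by (simp add: ts_def)
  next
    case False
    show ?thesis
    proof (cases "i = m")
      case True then show ?thesis using tsm tsn h by simp
    next
      case False
      then have "\<not> i < n" using \<open>\<not> Suc i < n\<close> mn by auto
      then show ?thesis by (simp add: ts_def)
    qed
  qed
  have ind: "indep_vars (\<lambda>_. borel) (Incr ts) {..<Suc m}"
    using W_indep[of ts "Suc m"] ts0 mono by (simp add: Incr_def[abs_def])
  define E where "E i = {Incr ts i -` A \<inter> space M | A. A \<in> sets borel}" for i
  define I where "I = case_bool {..<m} {m}"
  have indE: "indep_sets E (\<Union>j\<in>UNIV. I j)"
  proof -
    have "(\<Union>j\<in>UNIV. I j) = {..<Suc m}" by (auto simp: I_def UNIV_bool)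
    then show ?thesis using ind unfolding indep_vars_def2 E_def by simp
  qed
  have stab: "Int_stable (E i)" for i
    unfolding E_def Int_stable_def
  proof (intro ballI)
    fix x y assume "x \<in> {Incr ts i -` A \<inter> space M |A. A \<in> sets borel}" "y \<in> {Incr ts i -` A \<inter> space M |A. A \<in> sets borel}"
    then obtain A1 A2 where "x = Incr ts i -` A1 \<inter> space M" "y = Incr ts i -` A2 \<inter> space M" "A1 \<in> sets borel" "A2 \<in> sets borel" by auto
    then show "x \<inter> y \<in> {Incr ts i -` A \<inter> space M |A. A \<in> sets borel}" by (intro CollectI exI[of _ "A1 \<inter> A2"]) auto
  qed
  have disj: "disjoint_family_on I UNIV"
    by (auto simp: disjoint_family_on_def I_def UNIV_bool)
  have coll: "indep_sets (\<lambda>j. sigma_sets (space M) (\<Union>i\<in>I j. E i)) UNIV"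
    by (rule indep_sets_collect_sigma[OF indE stab disj])
  define S1 where "S1 = sigma_sets (space M) (\<Union>i<m. E i)"
  define S2 where "S2 = sigma_sets (space M) (E m)"
  have eqS: "(\<lambda>j. sigma_sets (space M) (\<Union>i\<in>I j. E i)) = case_bool S1 S2"
    by (rule ext) (simp add: I_def S1_def S2_def split: bool.split)
  have indS: "indep_set S1 S2"
    unfolding indep_set_def using coll eqS by simp
  define a where "a = {\<omega>\<in>space M. \<forall>j\<in>J. W j \<omega> \<in> B j}"
  define a' where "a' = {\<omega>\<in>space M. \<forall>j\<in>J. W j \<omega> - W 0 \<omega> \<in> B j}"
  define b where "b = (\<lambda>\<omega>. W (t+h) \<omega> - W t \<omega>) -` C \<inter> space M"
  have b_S2: "b \<in> S2"
  proof -
    have "b = Incr ts m -` C \<inter> space M" unfolding b_def Incr_def tsm tsn by simp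
    then show ?thesis unfolding S2_def E_def using C by auto
  qed
  have a'_S1: "a' \<in> S1"
  proof -
    define SM where "SM = sigma (space M) (\<Union>i<m. E i)"
    have EPow: "(\<Union>i<m. E i) \<subseteq> Pow (space M)" unfolding E_def by auto
    have setsSM: "sets SM = S1" unfolding SM_def S1_def using EPow by (simp add: sets_measure_of)
    have spSM: "space SM = space M" unfolding SM_def using EPow by simp
    have IncrSM: "Incr ts i \<in> borel_measurable SM" if "i < m" for i
    proof (rule measurableI)
      fix A :: "real set" assume "A \<in> sets borel"
      then have "Incr ts i -` A \<inter> space M \<in> (\<Union>i<m. E i)" using that unfolding E_def by auto
      then show "Incr ts i -` A \<inter> space SM \<in> sets SM"
        unfolding setsSM spSM S1_def by (rule sigma_sets.Basic)
    qed simp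
    have "\<forall>j\<in>J. \<exists>k. k < n \<and> L ! k = j" 
    proof
      fix j assume "j \<in> J"
      then have "j \<in> set L" using setL S_def by auto
      then show "\<exists>k. k < n \<and> L ! k = j" unfolding in_set_conv_nth n_def by blast
    qed
    then obtain kf where kf: "\<And>j. j \<in> J \<Longrightarrow> kf j < n \<and> L ! (kf j) = j" by metis
    have tel: "W j \<omega> - W 0 \<omega> = (\<Sum>i<kf j. Incr ts i \<omega>)" if "j \<in> J" for j \<omega>
    proof -
      have "(\<Sum>i<kf j. Incr ts i \<omega>) = (\<Sum>i<kf j. W (ts (Suc i)) \<omega> - W (ts i) \<omega>)"
        by (simp add: Incr_def)
      also have "\<dots> = W (ts (kf j)) \<omega> - W (ts 0) \<omega>"
        by (rule sum_lessThan_telescope[where f="\<lambda>i. W (ts i) \<omega>"])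
      also have "ts (kf j) = j" using kf[OF that] by (simp add: ts_def)
      finally show ?thesis using ts0 by simp
    qed
    have "a' = {\<omega>\<in>space SM. \<forall>j\<in>J. (\<Sum>i<kf j. Incr ts i \<omega>) \<in> B j}"
      unfolding a'_def spSM using tel by (simp cong: Collect_cong ball_cong)
    also have "\<dots> \<in> sets SM"
    proof -
      have "Measurable.pred SM (\<lambda>\<omega>. \<forall>j\<in>J. (\<Sum>i<kf j. Incr ts i \<omega>) \<in> B j)"
      proof (rule pred_intros_finite[OF J(1)])
        fix j assume "j \<in> J"
        then have km: "kf j \<le> m" using kf mn by fastforce
        have "(\<lambda>\<omega>. \<Sum>i<kf j. Incr ts i \<omega>) \<in> borel_measurable SM"
          by (rule borel_measurable_sum) (use km IncrSM in auto)
        from measurable_sets[OF this B[of j]]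
        show "Measurable.pred SM (\<lambda>\<omega>. (\<Sum>i<kf j. Incr ts i \<omega>) \<in> B j)"
          unfolding pred_def by (simp add: vimage_def Int_def conj_commute)
      qed
      then show ?thesis by (simp add: pred_def)
    qed
    finally show ?thesis using setsSM by simp
  qed
  have a_ev: "a \<in> events"
  proof -
    have "Measurable.pred M (\<lambda>\<omega>. \<forall>j\<in>J. W j \<omega> \<in> B j)"
      by (rule pred_intros_finite[OF J(1)]) (rule pred_mem[OF W_meas B])
    then show ?thesis by (simp add: pred_def a_def)
  qed
  have a'_ev: "a' \<in> events"
  proof -
    have "Measurable.pred M (\<lambda>\<omega>. \<forall>j\<in>J. W j \<omega> - W 0 \<omega> \<in> B j)"
      by (rule pred_intros_finite[OF J(1)]) (rule pred_mem[OF _ B], measurable)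
    then show ?thesis by (simp add: pred_def a'_def)
  qed
  have b_ev: "b \<in> events" unfolding b_def using C by measurable
  have ae: "AE \<omega> in M. W 0 \<omega> = 0" using W_AE by eventually_elim simp
  have aa': "prob a = prob a'"
    by (rule measure_eq_AE[OF _ a_ev a'_ev]) (use ae in \<open>eventually_elim, auto simp: a_def a'_def\<close>)
  have aa'b: "prob (a \<inter> b) = prob (a' \<inter> b)"
    by (rule measure_eq_AE[OF _ sets.Int[OF a_ev b_ev] sets.Int[OF a'_ev b_ev]]) (use ae in \<open>eventually_elim, auto simp: a_def a'_def\<close>)
  have "prob (a' \<inter> b) = prob a' * prob b" by (rule indep_setD[OF indS a'_S1 b_S2])
  then show ?thesis using aa' aa'b unfolding a_def b_def by simp
qed

end

context bmctx begin
abbreviation Fil where "Fil \<equiv> bm_filtration M W"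

definition gens :: "real \<Rightarrow> 'a set set" where
  "gens t = (\<Union>s\<in>{0..t}. {W s -` B \<inter> space M | B. B \<in> sets borel}) \<union> null_sets M"

lemma gens_sets: "gens t \<subseteq> sets M"
  unfolding gens_def by auto

lemma gens_Pow: "gens t \<subseteq> Pow (space M)"
  using gens_sets sets.sets_into_space by blast

lemma space_Fil[simp]: "space (Fil t) = space M"
  unfolding bm_filtration_def using gens_Pow[of t] by (simp add: gens_def)

lemma sets_Fil: "sets (Fil t) = sigma_sets (space M) (gens t)"
  unfolding bm_filtration_def using gens_Pow[of t] by (simp add: gens_def sets_measure_of)

lemma sets_Fil_sub: "sets (Fil t) \<subseteq> sets M"
  unfolding sets_Fil using gens_sets by (rule sets.sigma_sets_subset)

lemma gens_mono: "s \<le> t \<Longrightarrow> gens s \<subseteq> gens t"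
  unfolding gens_def by (intro Un_mono UN_mono) auto

lemma Fil_mono: "s \<le> t \<Longrightarrow> sets (Fil s) \<subseteq> sets (Fil t)"
  unfolding sets_Fil by (rule sigma_sets_mono'[OF gens_mono])

lemma null_Fil: "N \<in> null_sets M \<Longrightarrow> N \<in> sets (Fil t)"
  unfolding sets_Fil by (rule sigma_sets.Basic) (simp add: gens_def)

lemma W_Fil: "0 \<le> s \<Longrightarrow> s \<le> t \<Longrightarrow> W s \<in> borel_measurable (Fil t)"
proof (rule measurableI)
  fix A :: "real set" assume "A \<in> sets borel" "0 \<le> s" "s \<le> t"
  then have "W s -` A \<inter> space M \<in> gens t" unfolding gens_def by auto
  then show "W s -` A \<inter> space (Fil t) \<in> sets (Fil t)" unfolding sets_Fil by auto
qed simp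

lemma Fil_M: fixes f :: "'a \<Rightarrow> real" shows "f \<in> borel_measurable (Fil t) \<Longrightarrow> f \<in> borel_measurable M"
proof (rule measurableI)
  fix A :: "real set" assume "f \<in> borel_measurable (Fil t)" "A \<in> sets borel"
  then have "f -` A \<inter> space (Fil t) \<in> sets (Fil t)" by (rule measurable_sets)
  then show "f -` A \<inter> space M \<in> sets M" using sets_Fil_sub by auto
qed simp

lemma indep_fil:
  assumes t: "0 \<le> t" and h: "0 < h"
  shows "indep_set (sets (Fil t))
    (sigma_sets (space M) {(\<lambda>\<omega>. W (t+h) \<omega> - W t \<omega>) -` C \<inter> space M | C. C \<in> sets borel})"
proof -
  define D where "D = (\<lambda>\<omega>. W (t+h) \<omega> - W t \<omega>)"
  define Df where "Df = {D -` C \<inter> space M | C. C \<in> sets borel}"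
  define P where "P = {{\<omega>\<in>space M. \<forall>j\<in>J. W j \<omega> \<in> B j} | J B. finite J \<and> J \<subseteq> {0..t} \<and> (\<forall>j. B j \<in> sets borel)}"
  define G where "G = P \<union> null_sets M"
  have P_ev: "P \<subseteq> events"
  proof
    fix a assume "a \<in> P"
    then obtain J B where a: "a = {\<omega>\<in>space M. \<forall>j\<in>J. W j \<omega> \<in> B j}" "finite J" "\<And>j. B j \<in> sets borel"
      unfolding P_def by blast
    have "Measurable.pred M (\<lambda>\<omega>. \<forall>j\<in>J. W j \<omega> \<in> B j)"
      by (rule pred_intros_finite[OF a(2)]) (rule pred_mem[OF W_meas a(3)])
    then show "a \<in> events" by (simp add: pred_def a(1))
  qed
  have G_ev: "G \<subseteq> events" using P_ev by (auto simp: G_def)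
  have D_meas: "D \<in> borel_measurable M" unfolding D_def by measurable
  have Df_ev: "Df \<subseteq> events" unfolding Df_def using D_meas by auto
  have stabG: "Int_stable G"
  proof (rule Int_stableI)
    fix a b assume ab: "a \<in> G" "b \<in> G"
    show "a \<inter> b \<in> G"
    proof (cases "a \<in> null_sets M \<or> b \<in> null_sets M")
      case True
      then have "a \<inter> b \<in> null_sets M" using ab G_ev
        by (metis null_set_Int1 null_set_Int2 subsetD)
      then show ?thesis by (simp add: G_def)
    next
      case False
      then have "a \<in> P" "b \<in> P" using ab by (auto simp: G_def)
      then obtain J1 B1 J2 B2 where a: "a = {\<omega>\<in>space M. \<forall>j\<in>J1. W j \<omega> \<in> B1 j}" "finite J1" "J1 \<subseteq> {0..t}" "\<And>j. B1 j \<in> sets borel"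
        and b: "b = {\<omega>\<in>space M. \<forall>j\<in>J2. W j \<omega> \<in> B2 j}" "finite J2" "J2 \<subseteq> {0..t}" "\<And>j. B2 j \<in> sets borel"
        unfolding P_def by blast
      define B where "B j = (if j \<in> J1 then B1 j else UNIV) \<inter> (if j \<in> J2 then B2 j else UNIV)" for j
      have "a \<inter> b = {\<omega>\<in>space M. \<forall>j\<in>J1 \<union> J2. W j \<omega> \<in> B j}"
        unfolding a b B_def by auto
      moreover have "\<forall>j. B j \<in> sets borel" using a(4) b(4) by (simp add: B_def)
      ultimately have "a \<inter> b \<in> P" unfolding P_def using a(2,3) b(2,3)
        by (intro CollectI exI[of _ "J1 \<union> J2"] exI[of _ B]) auto
      then show ?thesis by (simp add: G_def)
    qed
  qed
  have stabDf: "Int_stable Df"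
  proof (rule Int_stableI)
    fix x y assume "x \<in> Df" "y \<in> Df"
    then obtain A1 A2 where "x = D -` A1 \<inter> space M" "y = D -` A2 \<inter> space M" "A1 \<in> sets borel" "A2 \<in> sets borel"
      unfolding Df_def by auto
    then show "x \<inter> y \<in> Df" unfolding Df_def by (intro CollectI exI[of _ "A1 \<inter> A2"]) auto
  qed
  have indG: "indep_set G Df"
    unfolding indep_sets2_eq
  proof (intro conjI ballI G_ev Df_ev)
    fix a b assume a: "a \<in> G" and b: "b \<in> Df"
    then obtain C where C: "b = D -` C \<inter> space M" "C \<in> sets borel" unfolding Df_def by auto
    show "prob (a \<inter> b) = prob a * prob b"
    proof (cases "a \<in> null_sets M")
      case True
      then have "a \<inter> b \<in> null_sets M" using b Df_ev by (auto intro: null_set_Int2)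
      then show ?thesis using True by (simp add: measure_def null_setsD1)
    next
      case False
      then have "a \<in> P" using a by (simp add: G_def)
      then obtain J B where aa: "a = {\<omega>\<in>space M. \<forall>j\<in>J. W j \<omega> \<in> B j}" "finite J" "J \<subseteq> {0..t}" "\<And>j. B j \<in> sets borel"
        unfolding P_def by blast
      show ?thesis unfolding aa(1) C(1) D_def by (rule core_indep[OF aa(2,3) t h aa(4) C(2)])
    qed
  qed
  have ind2: "indep_set (sigma_sets (space M) G) (sigma_sets (space M) Df)"
    by (rule indep_set_sigma_sets[OF indG stabG stabDf])
  have sub: "sets (Fil t) \<subseteq> sigma_sets (space M) G"
    unfolding sets_Fil
  proof (rule sigma_sets_mono')
    show "gens t \<subseteq> G"
    proof
      fix x assume "x \<in> gens t"
      then consider "x \<in> null_sets M" | s B where "s \<in> {0..t}" "B \<in> sets borel" "x = W s -` B \<inter> space M"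
        unfolding gens_def by blast
      then show "x \<in> G"
      proof cases
        case 1 then show ?thesis by (simp add: G_def)
      next
        case 2
        have "x = {\<omega>\<in>space M. \<forall>j\<in>{s}. W j \<omega> \<in> (\<lambda>_. B) j}" using 2 by auto
        then have "x \<in> P" unfolding P_def using 2
          by (intro CollectI exI[of _ "{s}"] exI[of _ "\<lambda>_. B"]) auto
        then show ?thesis by (simp add: G_def)
      qed
    qed
  qed
  have "Df \<subseteq> sigma_sets (space M) Df" by auto
  show ?thesis
    using ind2 sub unfolding D_def[symmetric] Df_def[symmetric] indep_sets2_eq
    by (meson subsetD order_trans)
qed

lemma indep_var_fil:
  fixes f :: "'a \<Rightarrow> real" and g :: "real \<Rightarrow> real"
  assumes t: "0 \<le> t" and h: "0 < h" and f: "f \<in> borel_measurable (Fil t)" and g: "g \<in> borel_measurable borel"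
  shows "indep_var borel f borel (\<lambda>\<omega>. g (W (t+h) \<omega> - W t \<omega>))"
  unfolding indep_var_eq
proof (intro conjI)
  show "random_variable borel f" using Fil_M[OF f] .
  show "random_variable borel (\<lambda>\<omega>. g (W (t+h) \<omega> - W t \<omega>))" using g by measurable
  have s1: "sigma_sets (space M) {f -` A \<inter> space M |A. A \<in> sets borel} \<subseteq> sets (Fil t)"
  proof -
    have "sigma_sets (space (Fil t)) {f -` A \<inter> space (Fil t) |A. A \<in> sets borel} \<subseteq> sets (Fil t)"
      by (rule sets.sigma_sets_subset) (use measurable_sets[OF f] in auto)
    then show ?thesis by simp
  qed
  have s2: "sigma_sets (space M) {(\<lambda>\<omega>. g (W (t+h) \<omega> - W t \<omega>)) -` A \<inter> space M |A. A \<in> sets borel}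
    \<subseteq> sigma_sets (space M) {(\<lambda>\<omega>. W (t+h) \<omega> - W t \<omega>) -` C \<inter> space M | C. C \<in> sets borel}"
  proof (rule sigma_sets_mono')
    show "{(\<lambda>\<omega>. g (W (t+h) \<omega> - W t \<omega>)) -` A \<inter> space M |A. A \<in> sets borel}
      \<subseteq> {(\<lambda>\<omega>. W (t+h) \<omega> - W t \<omega>) -` C \<inter> space M | C. C \<in> sets borel}"
    proof safe
      fix A :: "real set" assume "A \<in> sets borel"
      then have "g -` A \<inter> space borel \<in> sets borel" using g by (rule measurable_sets[rotated])
      then show "\<exists>C. (\<lambda>\<omega>. g (W (t + h) \<omega> - W t \<omega>)) -` A \<inter> space M = (\<lambda>\<omega>. W (t+h) \<omega> - W t \<omega>) -` C \<inter> space M \<and> C \<in> sets borel"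
        by (intro exI[of _ "g -` A"]) auto
    qed
  qed
  show "indep_set (sigma_sets (space M) {f -` A \<inter> space M |A. A \<in> sets borel})
     (sigma_sets (space M) {(\<lambda>\<omega>. g (W (t+h) \<omega> - W t \<omega>)) -` A \<inter> space M |A. A \<in> sets borel})"
    using indep_fil[OF t h] s1 s2 unfolding indep_sets2_eq by blast
qed

end

context bmctx begin

definition Y :: "real \<Rightarrow> real \<Rightarrow> 'a \<Rightarrow> real" where
  "Y b t \<omega> = exp (b * W t \<omega> - b\<^sup>2 / 2 * t)"

lemma Y_meas[measurable]: "Y b t \<in> borel_measurable M"
  unfolding Y_def by measurable

lemma Y_Fil: "0 \<le> t \<Longrightarrow> Y b t \<in> borel_measurable (Fil t)"
  unfolding Y_def using W_Fil[of t t] by measurable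

lemma W0_AE: "AE \<omega> in M. W 0 \<omega> = 0" using W_AE by eventually_elim simp

lemma Y_int: assumes "0 \<le> t" shows "integrable M (Y b t)" "integral\<^sup>L M (Y b t) = 1"
proof -
  have "integrable M (Y b t) \<and> integral\<^sup>L M (Y b t) = 1"
  proof (cases "t = 0")
    case True
    have ae: "AE \<omega> in M. Y b t \<omega> = 1" using W0_AE by eventually_elim (simp add: Y_def True)
    have "integrable M (\<lambda>_. 1::real)" by simp
    then show ?thesis using integrable_cong_AE[OF Y_meas _ ae] integral_cong_AE[OF Y_meas _ ae] by (simp add: prob_space)
  next
    case False
    then have t: "0 < t" using assms by simp
    have ae: "AE \<omega> in M. Y b t \<omega> = exp (b * (W (0 + t) \<omega> - W 0 \<omega>) - b\<^sup>2 * t / 2)"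
      using W0_AE by eventually_elim (simp add: Y_def)
    show ?thesis using mgf[OF order_refl t, of b] integrable_cong_AE[OF Y_meas _ ae] integral_cong_AE[OF Y_meas _ ae] by simp
  qed
  then show "integrable M (Y b t)" "integral\<^sup>L M (Y b t) = 1" by auto
qed

lemma mart_step:
  assumes t: "0 \<le> t" and h: "0 < h" and A: "A \<in> sets (Fil t)"
  shows "integrable M (\<lambda>\<omega>. indicator A \<omega> * Y b (t+h) \<omega>)"
    "(\<integral>\<omega>. indicator A \<omega> * Y b (t+h) \<omega> \<partial>M) = (\<integral>\<omega>. indicator A \<omega> * Y b t \<omega> \<partial>M)"
proof -
  define g where "g x = exp (b * x - b\<^sup>2 * h / 2)" for x
  have gm: "g \<in> borel_measurable borel" unfolding g_def by measurable
  have fm: "(\<lambda>\<omega>. indicator A \<omega> * Y b t \<omega>) \<in> borel_measurable (Fil t)"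
    using Y_Fil[OF t, of b] A by measurable
  have ind: "indep_var borel (\<lambda>\<omega>. indicator A \<omega> * Y b t \<omega>) borel (\<lambda>\<omega>. g (W (t+h) \<omega> - W t \<omega>))"
    by (rule indep_var_fil[OF t h fm gm])
  have AM: "A \<in> sets M" using A sets_Fil_sub by auto
  have i1: "integrable M (\<lambda>\<omega>. indicator A \<omega> * Y b t \<omega>)"
    using integrable_real_mult_indicator[OF AM Y_int(1)[OF t, of b]] by (simp add: mult.commute)
  have i2: "integrable M (\<lambda>\<omega>. g (W (t+h) \<omega> - W t \<omega>))"
    using mgf(1)[OF t h, of b] by (simp add: g_def)
  have e2: "(\<integral>\<omega>. g (W (t+h) \<omega> - W t \<omega>) \<partial>M) = 1"
    using mgf(2)[OF t h, of b] by (simp add: g_def)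
  have eq: "indicator A \<omega> * Y b (t+h) \<omega> = indicator A \<omega> * Y b t \<omega> * g (W (t+h) \<omega> - W t \<omega>)" for \<omega>
  proof -
    have "b * W (t + h) \<omega> - b\<^sup>2 / 2 * (t + h) = (b * W t \<omega> - b\<^sup>2 / 2 * t) + (b * (W (t + h) \<omega> - W t \<omega>) - b\<^sup>2 * h / 2)"
      by (simp add: algebra_simps)
    then show ?thesis unfolding Y_def g_def by (simp add: exp_add[symmetric])
  qed
  show "integrable M (\<lambda>\<omega>. indicator A \<omega> * Y b (t+h) \<omega>)"
    unfolding eq using indep_var_integrable[OF ind i1 i2] .
  show "(\<integral>\<omega>. indicator A \<omega> * Y b (t+h) \<omega> \<partial>M) = (\<integral>\<omega>. indicator A \<omega> * Y b t \<omega> \<partial>M)"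
    unfolding eq using indep_var_lebesgue_integral[OF ind i1 i2] e2 by simp
qed

end

context bmctx begin

definition dy :: "nat \<Rightarrow> real \<Rightarrow> real" where
  "dy n x = real (nat \<lceil>2^n * x\<rceil>) / 2^n"

lemma dy_repr:
  fixes f :: "real \<Rightarrow> real"
  assumes x: "0 \<le> x" "x \<le> 1"
  shows "f (dy n x) = f 0 + (\<Sum>k<2^n. (if real k / 2^n < x then 1 else 0) * f (real (Suc k) / 2^n)
                                     - (if real k / 2^n < x then 1 else 0) * f (real k / 2^n))"
proof -
  define j where "j = nat \<lceil>2^n * x\<rceil>"
  have jle: "j \<le> 2^n"
  proof -
    have "2^n * x \<le> 2^n" using x by simp
    then have "\<lceil>2^n * x\<rceil> \<le> 2^n" by (metis ceiling_le_iff of_int_numeral of_int_power)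
    then show ?thesis unfolding j_def by (simp add: nat_le_iff)
  qed
  have iff: "real k / 2^n < x \<longleftrightarrow> k < j" for k
  proof -
    have "real k / 2^n < x \<longleftrightarrow> real k < 2^n * x" by (simp add: divide_less_eq mult.commute)
    also have "\<dots> \<longleftrightarrow> int k < \<lceil>2^n * x\<rceil>" by (simp add: less_ceiling_iff)
    also have "\<dots> \<longleftrightarrow> k < j" unfolding j_def by linarith
    finally show ?thesis .
  qed
  have "(\<Sum>k<2^n. (if real k / 2^n < x then 1 else 0) * f (real (Suc k) / 2^n)
                                     - (if real k / 2^n < x then 1 else 0) * f (real k / 2^n))
       = (\<Sum>k<2^n. if k < j then f (real (Suc k) / 2^n) - f (real k / 2^n) else 0)"
    by (rule sum.cong) (auto simp: iff)
  also have "\<dots> = (\<Sum>k\<in>{..<2^n} \<inter> {k. k < j}. f (real (Suc k) / 2^n) - f (real k / 2^n))"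
    by (simp add: sum.inter_restrict del: of_nat_Suc)
  also have "{..<2^n} \<inter> {k. k < j} = {..<j}" using jle by auto
  also have "(\<Sum>k<j. f (real (Suc k) / 2^n) - f (real k / 2^n)) = f (real j / 2^n) - f (real 0 / 2^n)"
    by (rule sum_lessThan_telescope[where f="\<lambda>k. f (real k / 2^n)"])
  finally show ?thesis by (simp add: dy_def j_def)
qed

lemma ost_grid:
  assumes st: "stopping_time Fil \<sigma>" and rng: "\<And>\<omega>. \<omega> \<in> space M \<Longrightarrow> \<sigma> \<omega> \<in> {0..1}"
  shows "integrable M (\<lambda>\<omega>. Y b (dy n (\<sigma> \<omega>)) \<omega>)" "(\<integral>\<omega>. Y b (dy n (\<sigma> \<omega>)) \<omega> \<partial>M) = 1"
proof -
  define A where "A k = {\<omega>\<in>space M. real k / 2^n < \<sigma> \<omega>}" for k :: nat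
  have AF: "A k \<in> sets (Fil (real k / 2^n))" for k
    using stopping_timeD2[OF st, of "real k / 2^n"] unfolding pred_def A_def by simp
  have sc: "real (Suc k) / 2^n = real k / 2^n + 1 / 2^n" for k by (simp add: add_divide_distrib)
  have nn: "0 \<le> real k / (2::real)^n" for k by simp
  have hpos: "0 < 1 / (2::real)^n" by simp
  define T where "T \<omega> = Y b 0 \<omega> + (\<Sum>k<2^n. indicator (A k) \<omega> * Y b (real (Suc k) / 2^n) \<omega>
                                     - indicator (A k) \<omega> * Y b (real k / 2^n) \<omega>)" for \<omega>
  have eq: "Y b (dy n (\<sigma> \<omega>)) \<omega> = T \<omega>" if "\<omega> \<in> space M" for \<omega>
  proof -
    have x: "0 \<le> \<sigma> \<omega>" "\<sigma> \<omega> \<le> 1" using rng[OF that] by auto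
    have ind: "indicator (A k) \<omega> = (if real k / 2^n < \<sigma> \<omega> then 1 else (0::real))" for k
      using that by (simp add: A_def indicator_def)
    show ?thesis unfolding T_def ind using dy_repr[OF x, of "\<lambda>t. Y b t \<omega>" n] by simp
  qed
  have i1: "integrable M (\<lambda>\<omega>. indicator (A k) \<omega> * Y b (real (Suc k) / 2^n) \<omega>)" for k
    unfolding sc by (rule mart_step(1)[OF nn hpos AF])
  have i2: "integrable M (\<lambda>\<omega>. indicator (A k) \<omega> * Y b (real k / 2^n) \<omega>)" for k
    using AF[of k] sets_Fil_sub integrable_real_mult_indicator[OF _ Y_int(1)[OF nn, of b k]]
    by (auto simp: mult.commute)
  have e: "(\<integral>\<omega>. indicator (A k) \<omega> * Y b (real (Suc k) / 2^n) \<omega> \<partial>M) = (\<integral>\<omega>. indicator (A k) \<omega> * Y b (real k / 2^n) \<omega> \<partial>M)" for k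
    unfolding sc by (rule mart_step(2)[OF nn hpos AF])
  have iT: "integrable M T" unfolding T_def
    using Y_int(1)[OF order_refl] i1 i2 by (intro Bochner_Integration.integrable_add Bochner_Integration.integrable_sum Bochner_Integration.integrable_diff) auto
  have eT: "integral\<^sup>L M T = 1" unfolding T_def
    using Y_int[OF order_refl] i1 i2 e by (simp add: Bochner_Integration.integral_add Bochner_Integration.integral_sum Bochner_Integration.integral_diff integrable_sum)
  have eq': "\<forall>\<omega>\<in>space M. T \<omega> = Y b (dy n (\<sigma> \<omega>)) \<omega>" using eq by simp
  show "integrable M (\<lambda>\<omega>. Y b (dy n (\<sigma> \<omega>)) \<omega>)"
    using Bochner_Integration.integrable_cong[where M=M and N=M and f=T and g="\<lambda>\<omega>. Y b (dy n (\<sigma> \<omega>)) \<omega>"] eq' iT by simp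
  show "(\<integral>\<omega>. Y b (dy n (\<sigma> \<omega>)) \<omega> \<partial>M) = 1" using Bochner_Integration.integral_cong[where M=M and N=M and f=T and g="\<lambda>\<omega>. Y b (dy n (\<sigma> \<omega>)) \<omega>"] eq' eT by simp
qed

end

context bmctx begin

lemma sig_meas:
  assumes st: "stopping_time Fil \<sigma>"
  shows "\<sigma> \<in> borel_measurable M"
  unfolding borel_measurable_iff_le
proof
  fix a
  have "{w \<in> space (Fil a). \<sigma> w \<le> a} \<in> sets (Fil a)"
    using stopping_timeD[OF st, of a] by (simp add: pred_def)
  then show "{w \<in> space M. \<sigma> w \<le> a} \<in> sets M" using sets_Fil_sub by auto
qed

lemma dy_bounds:
  assumes "0 \<le> x" "x \<le> 1"
  shows "x \<le> dy n x" "dy n x \<le> x + 1 / 2^n" "0 \<le> dy n x" "dy n x \<le> 1"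
proof -
  have c1: "2^n * x \<le> real_of_int \<lceil>2^n * x\<rceil>" by (rule le_of_int_ceiling)
  have c2: "real_of_int \<lceil>2^n * x\<rceil> < 2^n * x + 1" using ceiling_correct[of "2^n*x"] by linarith
  have "0 \<le> 2^n * x" using assms by simp
  then have "(0::real) \<le> of_int \<lceil>2^n * x\<rceil>" using c1 by linarith
  then have nn: "0 \<le> \<lceil>2^n * x\<rceil>" by simp
  have eq: "real (nat \<lceil>2^n * x\<rceil>) = real_of_int \<lceil>2^n * x\<rceil>" using nn by simp
  have p: "(0::real) < 2^n" by simp
  show "x \<le> dy n x" unfolding dy_def eq using c1 p by (simp add: le_divide_eq mult.commute)
  have "2^n * (x + 1 / 2^n) = 2^n * x + 1" using p by (simp add: distrib_left)
  then show "dy n x \<le> x + 1 / 2^n" unfolding dy_def eq using c2 p by (simp add: divide_le_eq mult.commute)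
  show "0 \<le> dy n x" unfolding dy_def by simp
  have "\<lceil>2^n * x\<rceil> \<le> 2^n"
  proof -
    have "2^n * x \<le> 2^n" using assms by simp
    then show ?thesis by (metis ceiling_le_iff of_int_numeral of_int_power)
  qed
  then have "real_of_int \<lceil>2^n * x\<rceil> \<le> 2^n" by (metis of_int_le_iff of_int_numeral of_int_power)
  then show "dy n x \<le> 1" unfolding dy_def eq using p by simp
qed

lemma dy_tendsto:
  assumes "0 \<le> x" "x \<le> 1"
  shows "(\<lambda>n. dy n x) \<longlonglongrightarrow> x"
proof (rule real_tendsto_sandwich[of "\<lambda>n. x" _ _ "\<lambda>n. x + 1 / 2^n"])
  show "\<forall>\<^sub>F n in sequentially. x \<le> dy n x" using dy_bounds[OF assms] by simp
  show "\<forall>\<^sub>F n in sequentially. dy n x \<le> x + 1 / 2^n" using dy_bounds[OF assms] by simp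
  show "(\<lambda>n. x) \<longlonglongrightarrow> x" by simp
  have "(\<lambda>n. 1 / (2::real)^n) \<longlonglongrightarrow> 0"
    by (simp add: LIMSEQ_divide_realpow_zero)
  then show "(\<lambda>n. x + 1 / 2^n) \<longlonglongrightarrow> x" using tendsto_add[of "\<lambda>n. x" x sequentially] by fastforce
qed

lemma AE_meas:
  fixes f g :: "'a \<Rightarrow> real"
  assumes g: "g \<in> borel_measurable M" and ae: "AE x in M. f x = g x"
  shows "f \<in> borel_measurable M"
proof (rule measurableI)
  fix A :: "real set" assume A: "A \<in> sets borel"
  show "f -` A \<inter> space M \<in> sets M"
  proof (rule in_sets_AE)
    show "AE x in M. (x \<in> g -` A \<inter> space M) = (x \<in> f -` A \<inter> space M)"
      using ae by eventually_elim auto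
    show "g -` A \<inter> space M \<in> sets M" using g A by (rule measurable_sets)
  qed auto
qed simp

lemma Wdy_meas:
  assumes sm: "\<sigma> \<in> borel_measurable M"
  shows "(\<lambda>\<omega>. W (dy n (\<sigma> \<omega>)) \<omega>) \<in> borel_measurable M"
proof -
  have g: "(\<lambda>\<omega>. nat \<lceil>2^n * \<sigma> \<omega>\<rceil>) \<in> measurable M (count_space UNIV)"
    using sm by measurable
  have "(\<lambda>\<omega>. (\<lambda>k \<omega>. W (real k / 2^n) \<omega>) (nat \<lceil>2^n * \<sigma> \<omega>\<rceil>) \<omega>) \<in> borel_measurable M"
    by (rule measurable_compose_countable[OF _ g]) simp
  then show ?thesis by (simp add: dy_def)
qed

lemma Wsig:
  assumes sm: "\<sigma> \<in> borel_measurable M" and rng: "\<And>\<omega>. \<omega> \<in> space M \<Longrightarrow> \<sigma> \<omega> \<in> {0..1}"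
  shows "AE \<omega> in M. (\<lambda>n. W (dy n (\<sigma> \<omega>)) \<omega>) \<longlonglongrightarrow> W (\<sigma> \<omega>) \<omega>"
    and "(\<lambda>\<omega>. W (\<sigma> \<omega>) \<omega>) \<in> borel_measurable M"
proof -
  show ae: "AE \<omega> in M. (\<lambda>n. W (dy n (\<sigma> \<omega>)) \<omega>) \<longlonglongrightarrow> W (\<sigma> \<omega>) \<omega>"
    using W_AE
  proof (rule AE_mp, intro AE_I2 impI)
    fix \<omega> assume sp: "\<omega> \<in> space M" and c: "W 0 \<omega> = 0 \<and> continuous_on {0..} (\<lambda>t. W t \<omega>)"
    have x: "0 \<le> \<sigma> \<omega>" "\<sigma> \<omega> \<le> 1" using rng[OF sp] by auto
    show "(\<lambda>n. W (dy n (\<sigma> \<omega>)) \<omega>) \<longlonglongrightarrow> W (\<sigma> \<omega>) \<omega>"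
      by (rule continuous_on_tendsto_compose[OF c[THEN conjunct2] dy_tendsto[OF x]])
         (use x dy_bounds[OF x] in auto)
  qed
  have lm: "(\<lambda>\<omega>. lim (\<lambda>n. W (dy n (\<sigma> \<omega>)) \<omega>)) \<in> borel_measurable M"
    using Wdy_meas[OF sm] by measurable
  show "(\<lambda>\<omega>. W (\<sigma> \<omega>) \<omega>) \<in> borel_measurable M"
    by (rule AE_meas[OF lm]) (use ae in \<open>eventually_elim, simp add: limI\<close>)
qed

end

context bmctx begin

lemma min_sq_bound:
  fixes y K :: real assumes "0 \<le> y" "0 < K"
  shows "y - min y K \<le> y\<^sup>2 / K"
proof (cases "y \<le> K")
  case True then show ?thesis using assms by simp
next
  case False
  have a1: "K * (y - K) \<le> y * (y - K)" by (rule mult_right_mono) (use False in auto)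
  have a2: "y * (y - K) \<le> y * y" using assms by (simp add: mult_left_mono)
  from a1 a2 have "K * (y - K) \<le> y * y" by linarith
  then show ?thesis using False assms by (simp add: field_simps power2_eq_square)
qed

lemma Ysig:
  assumes st: "stopping_time Fil \<sigma>" and rng: "\<And>\<omega>. \<omega> \<in> space M \<Longrightarrow> \<sigma> \<omega> \<in> {0..1}"
  shows "integrable M (\<lambda>\<omega>. Y b (\<sigma> \<omega>) \<omega>)" "1 \<le> (\<integral>\<omega>. Y b (\<sigma> \<omega>) \<omega> \<partial>M)"
proof -
  have sm[measurable]: "\<sigma> \<in> borel_measurable M" by (rule sig_meas[OF st])
  define C where "C = exp (b\<^sup>2)"
  have Cpos: "0 < C" by (simp add: C_def)
  define Ys where "Ys n \<omega> = Y b (dy n (\<sigma> \<omega>)) \<omega>" for n \<omega>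
  define Y2 where "Y2 n \<omega> = Y (2*b) (dy n (\<sigma> \<omega>)) \<omega>" for n \<omega>
  define Ysg where "Ysg \<omega> = Y b (\<sigma> \<omega>) \<omega>" for \<omega>
  have dym[measurable]: "(\<lambda>\<omega>. dy n (\<sigma> \<omega>)) \<in> borel_measurable M" for n
    unfolding dy_def by measurable
  have Wdm[measurable]: "(\<lambda>\<omega>. W (dy n (\<sigma> \<omega>)) \<omega>) \<in> borel_measurable M" for n by (rule Wdy_meas[OF sm])
  have Wsm[measurable]: "(\<lambda>\<omega>. W (\<sigma> \<omega>) \<omega>) \<in> borel_measurable M" by (rule Wsig(2)[OF sm]) (rule rng)
  have Ysm[measurable]: "Ys n \<in> borel_measurable M" for n unfolding Ys_def Y_def by measurable
  have Y2m[measurable]: "Y2 n \<in> borel_measurable M" for n unfolding Y2_def Y_def by measurable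
  have Ysgm[measurable]: "Ysg \<in> borel_measurable M" unfolding Ysg_def Y_def by measurable
  have Ysi: "integrable M (Ys n)" "integral\<^sup>L M (Ys n) = 1" for n
    using ost_grid[OF st rng, of b n] by (simp_all add: Ys_def[abs_def])
  have Y2i: "integrable M (Y2 n)" "integral\<^sup>L M (Y2 n) = 1" for n
    using ost_grid[OF st rng, of "2*b" n] by (simp_all add: Y2_def[abs_def])
  have Ysnn: "0 \<le> Ys n \<omega>" for n \<omega> by (simp add: Ys_def Y_def)
  have Ysgnn: "0 \<le> Ysg \<omega>" for \<omega> by (simp add: Ysg_def Y_def)
  have sq: "(Ys n \<omega>)\<^sup>2 \<le> C * Y2 n \<omega>" if "\<omega> \<in> space M" for n \<omega>
  proof -
    have x: "0 \<le> \<sigma> \<omega>" "\<sigma> \<omega> \<le> 1" using rng[OF that] by auto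
    define d where "d = dy n (\<sigma> \<omega>)"
    have d1: "d \<le> 1" using dy_bounds(4)[OF x] by (simp add: d_def)
    have "(Ys n \<omega>)\<^sup>2 = exp (b\<^sup>2 * d) * Y2 n \<omega>"
    proof -
      have "2 * (b * W d \<omega> - b\<^sup>2 / 2 * d) = b\<^sup>2 * d + (2 * b * W d \<omega> - (2 * b)\<^sup>2 / 2 * d)"
        by (simp add: power2_eq_square algebra_simps)
      then show ?thesis unfolding Ys_def Y2_def Y_def d_def[symmetric]
        by (simp add: power2_eq_square exp_add[symmetric])
    qed
    also have "\<dots> \<le> C * Y2 n \<omega>"
      unfolding C_def by (rule mult_right_mono) (use d1 in \<open>simp_all add: Y2_def Y_def mult_left_le\<close>)
    finally show ?thesis .
  qed
  have wconv: "AE \<omega> in M. (\<lambda>n. W (dy n (\<sigma> \<omega>)) \<omega>) \<longlonglongrightarrow> W (\<sigma> \<omega>) \<omega>"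
    by (rule Wsig(1)[OF sm]) (rule rng)
  have conv: "AE \<omega> in M. (\<lambda>n. Ys n \<omega>) \<longlonglongrightarrow> Ysg \<omega>"
    using wconv
  proof (rule AE_mp, intro AE_I2 impI)
    fix \<omega> assume sp: "\<omega> \<in> space M" and c: "(\<lambda>n. W (dy n (\<sigma> \<omega>)) \<omega>) \<longlonglongrightarrow> W (\<sigma> \<omega>) \<omega>"
    have x: "0 \<le> \<sigma> \<omega>" "\<sigma> \<omega> \<le> 1" using rng[OF sp] by auto
    show "(\<lambda>n. Ys n \<omega>) \<longlonglongrightarrow> Ysg \<omega>"
      unfolding Ys_def Ysg_def Y_def
      by (intro tendsto_intros c dy_tendsto[OF x])
  qed
  have minK: "1 - C / K \<le> (\<integral>\<omega>. min (Ysg \<omega>) K \<partial>M) \<and> (\<integral>\<omega>. min (Ysg \<omega>) K \<partial>M) \<le> 1" if K: "0 < K" for K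
  proof -
    have mi: "integrable M (\<lambda>\<omega>. min (Ys n \<omega>) K)" for n
      by (rule Bochner_Integration.integrable_bound[OF Ysi(1)[of n]]) (use Ysnn K in \<open>auto intro!: AE_I2\<close>)
    have lim: "(\<lambda>n. \<integral>\<omega>. min (Ys n \<omega>) K \<partial>M) \<longlonglongrightarrow> (\<integral>\<omega>. min (Ysg \<omega>) K \<partial>M)"
    proof (rule integral_dominated_convergence[where w="\<lambda>_. K"])
      show "AE x in M. (\<lambda>i. min (Ys i x) K) \<longlonglongrightarrow> min (Ysg x) K"
        using conv by eventually_elim (intro tendsto_intros)
      show "AE x in M. norm (min (Ys i x) K) \<le> K" for i using Ysnn K by (auto intro!: AE_I2)
    qed simp_all
    have lo: "1 - C / K \<le> (\<integral>\<omega>. min (Ys n \<omega>) K \<partial>M)" for n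
    proof -
      have "(\<integral>\<omega>. Ys n \<omega> - C / K * Y2 n \<omega> \<partial>M) \<le> (\<integral>\<omega>. min (Ys n \<omega>) K \<partial>M)"
      proof (rule integral_mono_AE)
        show "integrable M (\<lambda>\<omega>. Ys n \<omega> - C / K * Y2 n \<omega>)" using Ysi Y2i by auto
        show "integrable M (\<lambda>\<omega>. min (Ys n \<omega>) K)" by (rule mi)
        show "AE \<omega> in M. Ys n \<omega> - C / K * Y2 n \<omega> \<le> min (Ys n \<omega>) K"
        proof (rule AE_I2)
          fix \<omega> assume sp: "\<omega> \<in> space M"
          have "Ys n \<omega> - min (Ys n \<omega>) K \<le> (Ys n \<omega>)\<^sup>2 / K" by (rule min_sq_bound[OF Ysnn K])
          also have "\<dots> \<le> C * Y2 n \<omega> / K" using sq[OF sp] K by (simp add: divide_right_mono)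
          finally have f1: "Ys n \<omega> - min (Ys n \<omega>) K \<le> C * Y2 n \<omega> / K" .
          have "C / K * Y2 n \<omega> = C * Y2 n \<omega> / K" by simp
          then show "Ys n \<omega> - C / K * Y2 n \<omega> \<le> min (Ys n \<omega>) K" using f1 by linarith
        qed
      qed
      also have "(\<integral>\<omega>. Ys n \<omega> - C / K * Y2 n \<omega> \<partial>M) = 1 - C / K"
        using Ysi Y2i by simp
      finally show ?thesis by simp
    qed
    have hi: "(\<integral>\<omega>. min (Ys n \<omega>) K \<partial>M) \<le> 1" for n
    proof -
      have "(\<integral>\<omega>. min (Ys n \<omega>) K \<partial>M) \<le> integral\<^sup>L M (Ys n)"
        by (rule integral_mono[OF mi Ysi(1)]) simp
      then show ?thesis using Ysi(2) by simp
    qed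
    show ?thesis
      using LIMSEQ_le_const[OF lim, of "1 - C / K"] LIMSEQ_le_const2[OF lim, of 1] lo hi by auto
  qed
  define f where "f k \<omega> = min (Ysg \<omega>) (real (Suc k))" for k \<omega>
  have fm[measurable]: "f k \<in> borel_measurable M" for k unfolding f_def by measurable
  have fi: "integrable M (f k)" for k
    by (rule Bochner_Integration.integrable_bound[where f="\<lambda>_. real (Suc k)"]) (use Ysgnn in \<open>auto intro!: AE_I2 simp: f_def\<close>)
  have fmono: "incseq (\<lambda>k. integral\<^sup>L M (f k))"
    by (rule incseq_SucI, rule integral_mono[OF fi fi]) (auto simp: f_def)
  have fbd: "bdd_above (range (\<lambda>k. integral\<^sup>L M (f k)))"
  proof (intro bdd_aboveI[of _ 1])
    fix x assume "x \<in> range (\<lambda>k. integral\<^sup>L M (f k))"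
    then obtain k where "x = integral\<^sup>L M (f k)" by auto
    then show "x \<le> 1" using minK[of "real (Suc k)"] by (simp add: f_def[abs_def])
  qed
  have flim: "(\<lambda>k. integral\<^sup>L M (f k)) \<longlonglongrightarrow> (SUP k. integral\<^sup>L M (f k))"
    by (rule LIMSEQ_incseq_SUP[OF fbd fmono])
  have mc_conv: "AE \<omega> in M. (\<lambda>k. f k \<omega>) \<longlonglongrightarrow> Ysg \<omega>"
  proof (rule AE_I2)
    fix \<omega>
    obtain N :: nat where "Ysg \<omega> \<le> real N" using real_arch_simple by blast
    then have "\<forall>\<^sub>F k in sequentially. f k \<omega> = Ysg \<omega>"
      unfolding eventually_sequentially by (intro exI[of _ N]) (auto simp: f_def)
    then show "(\<lambda>k. f k \<omega>) \<longlonglongrightarrow> Ysg \<omega>" by (rule tendsto_eventually)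
  qed
  have mono: "AE \<omega> in M. mono (\<lambda>k. f k \<omega>)"
    by (intro AE_I2 monoI) (auto simp: f_def)
  note MC = integral_monotone_convergence_nonneg[OF fi mono _ mc_conv flim Ysgm]
  have MC1: "integrable M Ysg" "integral\<^sup>L M Ysg = (SUP k. integral\<^sup>L M (f k))"
    using MC Ysgnn by (auto simp: f_def)
  show "integrable M (\<lambda>\<omega>. Y b (\<sigma> \<omega>) \<omega>)" using MC1(1) by (simp add: Ysg_def[abs_def])
  have lb: "1 - C / real (Suc k) \<le> integral\<^sup>L M (f k)" for k using minK[of "real (Suc k)"] by (simp add: f_def[abs_def])
  have "(\<lambda>k. 1 - C / real (Suc k)) \<longlonglongrightarrow> 1 - 0"
    by (intro tendsto_intros LIMSEQ_Suc[OF lim_const_over_n])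
  then have "1 \<le> (SUP k. integral\<^sup>L M (f k))"
    using flim lb by (intro LIMSEQ_le[where X="\<lambda>k. 1 - C / real (Suc k)"]) auto
  then show "1 \<le> (\<integral>\<omega>. Y b (\<sigma> \<omega>) \<omega> \<partial>M)" using MC1(2) by (simp add: Ysg_def[abs_def])
qed

end


lemma pw_lower:
  fixes s z l :: real
  assumes "0 \<le> s" "0 < z" "2 \<le> l"
  shows "z \<le> (1+s) * max z (1/2) * min 1 (l*z)"
proof (cases "z \<ge> 1/2")
  case True
  then have "1 \<le> l * z" using assms by (metis dual_order.trans mult.commute mult_mono' le_divide_eq_numeral1(1) less_le zero_le_numeral divide_le_eq_numeral1(1) order_refl) 
  then have "min 1 (l*z) = 1" by simp
  moreover have "max z (1/2) = z" using True by simp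
  ultimately show ?thesis using assms by (simp add: mult_left_mono)
next
  case False
  then have m: "max z (1/2) = 1/2" by simp
  have "2 * z \<le> l * z" using assms by (simp add: mult_right_mono)
  moreover have "2 * z \<le> 1" using False by simp
  ultimately have mm: "2 * z \<le> min 1 (l*z)" by simp
  have "z = 1/2 * (2*z)" by simp
  also have "\<dots> \<le> 1/2 * min 1 (l*z)" using mm by simp
  also have "\<dots> \<le> (1+s) * (1/2 * min 1 (l*z))"
  proof -
    have "0 \<le> s * (1/2 * min 1 (l*z))" using assms by simp
    then show ?thesis by (simp add: algebra_simps)
  qed
  finally show ?thesis using m by (simp add: mult.assoc)
qed

lemma pw_upper:
  fixes s z l :: real
  assumes "0 \<le> s" "s \<le> 1" "0 \<le> z" "0 < l"
  shows "0 \<le> (1+s) * max z (1/2) * min 1 (l*z)" "(1+s) * max z (1/2) * min 1 (l*z) \<le> 2*z+2"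
proof -
  have a: "0 \<le> min 1 (l*z)" "min 1 (l*z) \<le> 1" using assms by auto
  have b: "0 \<le> max z (1/2)" "max z (1/2) \<le> z + 1" using assms by auto
  show "0 \<le> (1+s) * max z (1/2) * min 1 (l*z)" using a b assms by simp
  have "(1+s) * max z (1/2) * min 1 (l*z) \<le> 2 * (z+1) * 1"
    using a b assms by (intro mult_mono) auto
  then show "(1+s) * max z (1/2) * min 1 (l*z) \<le> 2*z+2" by simp
qed

lemma pw_conc:
  fixes z x y t u :: real
  assumes "0 \<le> u" "0 \<le> z" "0 < x" "0 < y" "0 \<le> t" "t \<le> 1"
  shows "t * (u * min 1 (x*z)) + (1-t) * (u * min 1 (y*z)) \<le> u * min 1 ((t*x+(1-t)*y)*z)"
proof -
  have "t * min 1 (x*z) + (1-t) * min 1 (y*z) \<le> min 1 ((t*x+(1-t)*y)*z)"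
  proof (rule min.boundedI)
    have "t * min 1 (x*z) + (1-t) * min 1 (y*z) \<le> t * 1 + (1-t) * 1"
      using assms by (intro add_mono mult_left_mono) auto
    then show "t * min 1 (x*z) + (1-t) * min 1 (y*z) \<le> 1" by simp
    have "t * min 1 (x*z) + (1-t) * min 1 (y*z) \<le> t * (x*z) + (1-t) * (y*z)"
      using assms by (intro add_mono mult_left_mono) auto
    then show "t * min 1 (x*z) + (1-t) * min 1 (y*z) \<le> (t*x+(1-t)*y)*z" by (simp add: algebra_simps)
  qed
  then have "u * (t * min 1 (x*z) + (1-t) * min 1 (y*z)) \<le> u * min 1 ((t*x+(1-t)*y)*z)"
    using assms by (intro mult_left_mono) auto
  then show ?thesis by (simp add: algebra_simps)
qed

lemma pw_one:
  fixes x z :: real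
  assumes "0 < x" "x \<le> 2" "0 < z"
  shows "max z (1/2) * min 1 (x*z) \<le> z - (2-x)/2 * (z * (if z < 1/2 then 1 else 0))"
proof (cases "z < 1/2")
  case True
  have "x * z \<le> 2 * z" using assms by (simp add: mult_right_mono)
  then have "x * z < 1" using True by linarith
  then show ?thesis using True by (simp add: field_simps)
next
  case False
  then have "max z (1/2) * min 1 (x*z) \<le> z * 1" using assms by (intro mult_mono) auto
  then show ?thesis using False by simp
qed



context bmctx begin
lemma Ysig_meas:
  assumes st: "stopping_time Fil \<sigma>" and rng: "\<And>\<omega>. \<omega> \<in> space M \<Longrightarrow> \<sigma> \<omega> \<in> {0..1}"
  shows "(\<lambda>\<omega>. Y b (\<sigma> \<omega>) \<omega>) \<in> borel_measurable M"
proof -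
  have sm[measurable]: "\<sigma> \<in> borel_measurable M" by (rule sig_meas[OF st])
  have Wsm[measurable]: "(\<lambda>\<omega>. W (\<sigma> \<omega>) \<omega>) \<in> borel_measurable M" by (rule Wsig(2)[OF sm]) (rule rng)
  show ?thesis unfolding Y_def by measurable
qed
end

theorem mainTheorem6:
  fixes M :: "'a measure" and W :: "real \<Rightarrow> 'a \<Rightarrow> real"
    and \<kappa> \<theta> :: real
    and Z X :: "real \<Rightarrow> 'a \<Rightarrow> real" and F :: "real \<Rightarrow> real" and \<nu> :: real
  assumes BM: "brownian_motion M W"
    and complete: "complete_measure M"
    and kappa: "\<kappa> > 0"
    and Z_def: "\<And>t \<omega>. Z t \<omega> = exp (- (\<theta> / \<kappa>) * W t \<omega> - \<theta>\<^sup>2 / (2 * \<kappa>\<^sup>2) * t)"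
    and X_def: "\<And>t \<omega>. X t \<omega> = (1 + sin (pi * t)) * max (Z t \<omega>) (1/2)"
    and F_def: "\<And>l. l > 0 \<Longrightarrow>
        F l = (INF \<sigma>\<in>stopping_times01 M W.
                  integral\<^sup>L M (\<lambda>\<omega>. X (\<sigma> \<omega>) \<omega> * min 1 (l * Z (\<sigma> \<omega>) \<omega>)))"
    and nu_def: "\<nu> = 1/2 * integral\<^sup>L M (\<lambda>\<omega>. Z 1 \<omega> * indicator {\<omega>. Z 1 \<omega> < 1/2} \<omega>)"
  shows "(\<forall>l\<ge>2. F l = 1) \<and>
         (\<exists>d. ((\<lambda>x. (F x - F 2) / (x - 2)) \<longlongrightarrow> d) (at_left 2) \<and> d \<ge> \<nu>)"
proof -
  interpret bmctx M W by (rule bmctx.intro[OF BM complete])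
  define a where "a = \<theta> / \<kappa>"
  have Zeq: "Z t \<omega> = Y (-a) t \<omega>" for t \<omega>
  proof -
    have "\<theta>\<^sup>2 / (2 * \<kappa>\<^sup>2) * t = (- a)\<^sup>2 / 2 * t" using kappa by (simp add: a_def power_divide field_simps)
    then show ?thesis unfolding Z_def Y_def by (simp add: a_def)
  qed
  define S where "S = stopping_times01 M W"
  have S_iff: "\<sigma> \<in> S \<longleftrightarrow> stopping_time Fil \<sigma> \<and> (\<forall>\<omega>\<in>space M. \<sigma> \<omega> \<in> {0..1})" for \<sigma>
    by (simp add: S_def stopping_times01_def)
  define g where "g \<sigma> l = (\<integral>\<omega>. X (\<sigma> \<omega>) \<omega> * min 1 (l * Z (\<sigma> \<omega>) \<omega>) \<partial>M)" for \<sigma> :: "'a \<Rightarrow> real" and l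
  have F_g: "F l = (INF \<sigma>\<in>S. g \<sigma> l)" if "l > 0" for l
    using F_def[OF that] by (simp add: S_def g_def)
  have S0: "(\<lambda>_. 0) \<in> S" and S1: "(\<lambda>_. 1) \<in> S" by (auto simp: S_iff stopping_time_const)
  have Sne: "S \<noteq> {}" using S0 by auto
  have Zs: "integrable M (\<lambda>\<omega>. Z (\<sigma> \<omega>) \<omega>)" "1 \<le> (\<integral>\<omega>. Z (\<sigma> \<omega>) \<omega> \<partial>M)"
          "(\<lambda>\<omega>. Z (\<sigma> \<omega>) \<omega>) \<in> borel_measurable M" if "\<sigma> \<in> S" for \<sigma>
    using Ysig[of \<sigma> "-a"] Ysig_meas[of \<sigma> "-a"] that by (auto simp: S_iff Zeq)
  have sm: "\<sigma> \<in> borel_measurable M" if "\<sigma> \<in> S" for \<sigma> using sig_meas that by (auto simp: S_iff)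
  have sinb: "0 \<le> sin (pi * \<sigma> \<omega>) \<and> sin (pi * \<sigma> \<omega>) \<le> 1" if "\<sigma> \<in> S" "\<omega> \<in> space M" for \<sigma> \<omega>
  proof -
    have "0 \<le> \<sigma> \<omega>" "\<sigma> \<omega> \<le> 1" using that by (auto simp: S_iff)
    then have "0 \<le> pi * \<sigma> \<omega>" "pi * \<sigma> \<omega> \<le> pi" by (auto simp: mult_left_le)
    then show ?thesis by (simp add: sin_ge_zero)
  qed
  have Zpos: "0 < Z t \<omega>" for t \<omega> by (simp add: Z_def)
  have integrand_meas: "(\<lambda>\<omega>. X (\<sigma> \<omega>) \<omega> * min 1 (l * Z (\<sigma> \<omega>) \<omega>)) \<in> borel_measurable M" if "\<sigma> \<in> S" for \<sigma> l
  proof -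
    note [measurable] = Zs(3)[OF that] sm[OF that]
    show ?thesis unfolding X_def by measurable
  qed
  have int_g: "integrable M (\<lambda>\<omega>. X (\<sigma> \<omega>) \<omega> * min 1 (l * Z (\<sigma> \<omega>) \<omega>))" if "\<sigma> \<in> S" "0 < l" for \<sigma> l
  proof (rule Bochner_Integration.integrable_bound[OF _ integrand_meas[OF that(1)]])
    show "integrable M (\<lambda>\<omega>. 2 * Z (\<sigma> \<omega>) \<omega> + 2)" using Zs(1)[OF that(1)] by simp
    show "AE \<omega> in M. norm (X (\<sigma> \<omega>) \<omega> * min 1 (l * Z (\<sigma> \<omega>) \<omega>)) \<le> norm (2 * Z (\<sigma> \<omega>) \<omega> + 2)"
    proof (rule AE_I2)
      fix \<omega> assume "\<omega> \<in> space M"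
      note pw = pw_upper[of "sin (pi * \<sigma> \<omega>)" "Z (\<sigma> \<omega>) \<omega>" l]
      show "norm (X (\<sigma> \<omega>) \<omega> * min 1 (l * Z (\<sigma> \<omega>) \<omega>)) \<le> norm (2 * Z (\<sigma> \<omega>) \<omega> + 2)"
        using pw sinb[OF that(1) \<open>\<omega> \<in> space M\<close>] Zpos[of "\<sigma> \<omega>" \<omega>] that(2) unfolding X_def by simp
    qed
  qed
  have g_nn: "0 \<le> g \<sigma> l" if "\<sigma> \<in> S" "0 < l" for \<sigma> l
    unfolding g_def
  proof (rule integral_nonneg_AE, rule AE_I2)
    fix \<omega> assume "\<omega> \<in> space M"
    show "0 \<le> X (\<sigma> \<omega>) \<omega> * min 1 (l * Z (\<sigma> \<omega>) \<omega>)"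
      using pw_upper(1)[of "sin (pi * \<sigma> \<omega>)" "Z (\<sigma> \<omega>) \<omega>" l] sinb[OF that(1) \<open>\<omega> \<in> space M\<close>] Zpos[of "\<sigma> \<omega>" \<omega>] that(2)
      unfolding X_def by simp
  qed
  have bdd: "bdd_below ((\<lambda>\<sigma>. g \<sigma> l) ` S)" if "0 < l" for l
    using g_nn that by (intro bdd_belowI[of _ 0]) auto
  have g_ge1: "1 \<le> g \<sigma> l" if "\<sigma> \<in> S" "2 \<le> l" for \<sigma> l
  proof -
    have "1 \<le> (\<integral>\<omega>. Z (\<sigma> \<omega>) \<omega> \<partial>M)" by (rule Zs(2)[OF that(1)])
    also have "\<dots> \<le> g \<sigma> l" unfolding g_def
    proof (rule integral_mono_AE[OF Zs(1)[OF that(1)] int_g[OF that(1)]])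
      show "AE \<omega> in M. Z (\<sigma> \<omega>) \<omega> \<le> X (\<sigma> \<omega>) \<omega> * min 1 (l * Z (\<sigma> \<omega>) \<omega>)"
      proof (rule AE_I2)
        fix \<omega> assume "\<omega> \<in> space M"
        show "Z (\<sigma> \<omega>) \<omega> \<le> X (\<sigma> \<omega>) \<omega> * min 1 (l * Z (\<sigma> \<omega>) \<omega>)"
          using pw_lower[of "sin (pi * \<sigma> \<omega>)" "Z (\<sigma> \<omega>) \<omega>" l] sinb[OF that(1) \<open>\<omega> \<in> space M\<close>] Zpos[of "\<sigma> \<omega>" \<omega>] that(2)
          unfolding X_def by simp
      qed
    qed (use that in simp)
    finally show ?thesis .
  qed
  have g0: "g (\<lambda>_. 0) l = 1" if "2 \<le> l" for l
  proof -
    have ae: "AE \<omega> in M. X 0 \<omega> * min 1 (l * Z 0 \<omega>) = 1"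
      using W0_AE by eventually_elim (use that in \<open>simp add: X_def Z_def\<close>)
    have "g (\<lambda>_. 0) l = (\<integral>\<omega>. 1 \<partial>M)"
      unfolding g_def by (rule integral_cong_AE) (use ae in \<open>simp_all add: X_def Z_def\<close>)
    then show ?thesis by (simp add: prob_space)
  qed
  have part1: "\<forall>l\<ge>2. F l = 1"
  proof (intro allI impI)
    fix l :: real assume l: "2 \<le> l"
    have "F l = (INF \<sigma>\<in>S. g \<sigma> l)" using F_g l by simp
    also have "\<dots> = 1"
      by (rule cInf_eq_minimum) (use S0 g0[OF l] g_ge1 l in auto)
    finally show "F l = 1" .
  qed
  have F_le: "F l \<le> g \<sigma> l" if "\<sigma> \<in> S" "0 < l" for \<sigma> l
    unfolding F_g[OF that(2)] by (rule cINF_lower[OF bdd[OF that(2)] that(1)])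
  have conc: "t * F x + (1-t) * F y \<le> F (t*x + (1-t)*y)"
    if xy: "0 < x" "0 < y" "0 \<le> t" "t \<le> 1" for x y t
  proof -
    have pos: "0 < t*x + (1-t)*y"
    proof (cases "t = 0")
      case True then show ?thesis using xy by simp
    next
      case False
      then have "0 < t * x" using xy by simp
      moreover have "0 \<le> (1-t)*y" using xy by simp
      ultimately show ?thesis by simp
    qed
    show ?thesis unfolding F_g[OF pos]
    proof (rule cINF_greatest[OF Sne])
      fix \<sigma> assume s: "\<sigma> \<in> S"
      have "t * F x + (1-t) * F y \<le> t * g \<sigma> x + (1-t) * g \<sigma> y"
        using F_le[OF s xy(1)] F_le[OF s xy(2)] xy by (intro add_mono mult_left_mono) auto
      also have "\<dots> = (\<integral>\<omega>. t * (X (\<sigma> \<omega>) \<omega> * min 1 (x * Z (\<sigma> \<omega>) \<omega>)) + (1-t) * (X (\<sigma> \<omega>) \<omega> * min 1 (y * Z (\<sigma> \<omega>) \<omega>)) \<partial>M)"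
        using int_g[OF s xy(1)] int_g[OF s xy(2)] by (simp add: g_def)
      also have "\<dots> \<le> g \<sigma> (t*x + (1-t)*y)" unfolding g_def
      proof (rule integral_mono_AE)
        show "integrable M (\<lambda>\<omega>. t * (X (\<sigma> \<omega>) \<omega> * min 1 (x * Z (\<sigma> \<omega>) \<omega>)) + (1-t) * (X (\<sigma> \<omega>) \<omega> * min 1 (y * Z (\<sigma> \<omega>) \<omega>)))"
          using int_g[OF s xy(1)] int_g[OF s xy(2)] by simp
        show "integrable M (\<lambda>\<omega>. X (\<sigma> \<omega>) \<omega> * min 1 ((t*x + (1-t)*y) * Z (\<sigma> \<omega>) \<omega>))"
          by (rule int_g[OF s pos])
        show "AE \<omega> in M. t * (X (\<sigma> \<omega>) \<omega> * min 1 (x * Z (\<sigma> \<omega>) \<omega>)) + (1-t) * (X (\<sigma> \<omega>) \<omega> * min 1 (y * Z (\<sigma> \<omega>) \<omega>))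
             \<le> X (\<sigma> \<omega>) \<omega> * min 1 ((t*x + (1-t)*y) * Z (\<sigma> \<omega>) \<omega>)"
        proof (rule AE_I2)
          fix \<omega> assume "\<omega> \<in> space M"
          have "0 \<le> X (\<sigma> \<omega>) \<omega>" using sinb[OF s \<open>\<omega> \<in> space M\<close>] unfolding X_def by simp
          then show "t * (X (\<sigma> \<omega>) \<omega> * min 1 (x * Z (\<sigma> \<omega>) \<omega>)) + (1-t) * (X (\<sigma> \<omega>) \<omega> * min 1 (y * Z (\<sigma> \<omega>) \<omega>))
             \<le> X (\<sigma> \<omega>) \<omega> * min 1 ((t*x + (1-t)*y) * Z (\<sigma> \<omega>) \<omega>)"
            using pw_conc[of "X (\<sigma> \<omega>) \<omega>" "Z (\<sigma> \<omega>) \<omega>" x y t] Zpos[of "\<sigma> \<omega>" \<omega>] xy by simp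
        qed
      qed
      finally show "t * F x + (1-t) * F y \<le> g \<sigma> (t*x + (1-t)*y)" .
    qed
  qed
  have Z1: "integrable M (Z 1)" "integral\<^sup>L M (Z 1) = 1" using Y_int[of 1 "-a"] by (simp_all add: Zeq[abs_def])
  have Z1m[measurable]: "Z 1 \<in> borel_measurable M" using Z1(1) by auto
  define I1 where "I1 \<omega> = Z 1 \<omega> * indicator {\<omega>. Z 1 \<omega> < 1/2} \<omega>" for \<omega>
  have I1m: "I1 \<in> borel_measurable M"
  proof -
    have "I1 = (\<lambda>\<omega>. Z 1 \<omega> * (if Z 1 \<omega> < 1/2 then 1 else 0))" by (auto simp: I1_def indicator_def)
    also have "\<dots> \<in> borel_measurable M" by measurable
    finally show ?thesis .
  qed
  have I1i: "integrable M I1"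
    by (rule Bochner_Integration.integrable_bound[OF Z1(1) I1m]) (auto intro!: AE_I2 simp: I1_def indicator_def Zpos less_imp_le)
  have nu_I: "\<nu> = 1/2 * integral\<^sup>L M I1" by (simp add: nu_def I1_def[abs_def])
  have g1: "g (\<lambda>_. 1) x \<le> 1 - (2 - x) * \<nu>" if x: "0 < x" "x \<le> 2" for x
  proof -
    have "g (\<lambda>_. 1) x \<le> (\<integral>\<omega>. Z 1 \<omega> - (2-x)/2 * I1 \<omega> \<partial>M)" unfolding g_def
    proof (rule integral_mono_AE)
      show "integrable M (\<lambda>\<omega>. X 1 \<omega> * min 1 (x * Z 1 \<omega>))" using int_g[OF S1 x(1)] by simp
      show "integrable M (\<lambda>\<omega>. Z 1 \<omega> - (2-x)/2 * I1 \<omega>)" using Z1(1) I1i by simp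
      show "AE \<omega> in M. X 1 \<omega> * min 1 (x * Z 1 \<omega>) \<le> Z 1 \<omega> - (2-x)/2 * I1 \<omega>"
      proof (rule AE_I2)
        fix \<omega>
        have "I1 \<omega> = Z 1 \<omega> * (if Z 1 \<omega> < 1/2 then 1 else 0)" by (simp add: I1_def indicator_def)
        then show "X 1 \<omega> * min 1 (x * Z 1 \<omega>) \<le> Z 1 \<omega> - (2-x)/2 * I1 \<omega>"
          using pw_one[OF x Zpos[of 1 \<omega>]] by (simp add: X_def)
      qed
    qed
    also have "\<dots> = 1 - (2 - x) * \<nu>" using Z1 I1i by (simp add: nu_I)
    finally show ?thesis .
  qed
  have F_up: "F x \<le> 1 - (2 - x) * \<nu>" if "0 < x" "x \<le> 2" for x
    using F_le[OF S1 that(1)] g1[OF that] by simp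
  have F2: "F 2 = 1" using part1 by simp
  define q where "q x = (F x - F 2) / (x - 2)" for x
  have q_ge: "\<nu> \<le> q x" if "0 < x" "x < 2" for x
  proof -
    have "F x - 1 \<le> (x - 2) * \<nu>" using F_up[of x] that by (simp add: algebra_simps)
    then have "F x - 1 \<le> \<nu> * (x - 2)" by (simp add: mult.commute)
    then show ?thesis using that unfolding q_def F2 by (simp add: le_divide_eq)
  qed
  have q_mono: "q y \<le> q x" if "0 < x" "x < y" "y < 2" for x y
  proof -
    define t where "t = (2 - y) / (2 - x)"
    have t01: "0 \<le> t" "t \<le> 1" using that by (auto simp: t_def)
    have nz: "2 - x \<noteq> 0" using that by simp
    have t2: "t * (2 - x) = 2 - y" using nz by (simp add: t_def)
    have "(t * x + (1 - t) * 2) * (2 - x) = (t * (2 - x)) * x + 2 * (2 - x) - 2 * (t * (2 - x))"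
      by (simp add: algebra_simps)
    also have "\<dots> = y * (2 - x)" unfolding t2 by (simp add: algebra_simps)
    finally have ty: "t * x + (1 - t) * 2 = y" using nz by simp
    have "t * F x + (1 - t) * F 2 \<le> F y" using conc[OF that(1) _ t01, of 2] ty by simp
    then have "t * (F x - F 2) \<le> F y - F 2" by (simp add: algebra_simps)
    then have "(F y - F 2) / (y - 2) \<le> t * (F x - F 2) / (y - 2)" using that by (simp add: divide_right_mono_neg)
    also have "t * (F x - F 2) / (y - 2) = (F x - F 2) / (x - 2)"
    proof -
      have tx: "y - 2 = t * (x - 2)" using t2 by (simp add: algebra_simps)
      have tpos: "t \<noteq> 0" using that by (simp add: t_def)
      show ?thesis unfolding tx using tpos by simp
    qed
    finally show ?thesis by (simp add: q_def)
  qed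
  define d where "d = (INF x\<in>{1<..<2}. q x)"
  have ne: "{1<..<(2::real)} \<noteq> {}" by (auto intro!: exI[of _ "3/2"])
  have bddq: "bdd_below (q ` {1<..<2})" using q_ge by (intro bdd_belowI[of _ \<nu>]) auto
  have d_ge: "\<nu> \<le> d" unfolding d_def by (rule cINF_greatest[OF ne]) (use q_ge in auto)
  have lim: "(q \<longlongrightarrow> d) (at_left 2)"
  proof (rule order_tendstoI)
    fix e assume "e < d"
    have "\<forall>\<^sub>F x in at_left 2. x \<in> {1<..<(2::real)}" by (rule eventually_at_left_real) simp
    then show "\<forall>\<^sub>F x in at_left 2. e < q x"
    proof (rule eventually_mono)
      fix x :: real assume "x \<in> {1<..<2}"
      then have "d \<le> q x" unfolding d_def by (rule cINF_lower[OF bddq])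
      then show "e < q x" using \<open>e < d\<close> by simp
    qed
  next
    fix e assume "d < e"
    then obtain x0 where x0: "x0 \<in> {1<..<2}" "q x0 < e"
      unfolding d_def using cINF_less_iff[OF ne bddq] by auto
    have "\<forall>\<^sub>F x in at_left 2. x \<in> {x0<..<(2::real)}" by (rule eventually_at_left_real) (use x0 in simp)
    then show "\<forall>\<^sub>F x in at_left 2. q x < e"
    proof (rule eventually_mono)
      fix x :: real assume "x \<in> {x0<..<2}"
      then have "q x \<le> q x0" using x0 by (intro q_mono) auto
      then show "q x < e" using x0 by simp
    qed
  qed
  show ?thesis using part1 lim d_ge unfolding q_def by auto
qed


end
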